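(* For every finite item set $M$, every $n\ge1$, and every $n$ normalized monotone valuations $v_1,\dots,v_n$ on $M$, there exists a partial allocation $A_0,A_1,\dots,A_n$ such that (i) $v_i(A_i)\ge\mathrm{RMMS}(M,v_i,n)$ for every $i\ge1$, and (ii) it is EFX: for all agents $i\neq j$ (with $i,j\ge1$) and every item $e\in A_j$, $v_i(A_i)\ge v_i(A_j-e)$.
   Context: A valuation is a function $v:2^M\to\mathbb{R}$ that is normalized ($v(\emptyset)=0$) and monotone ($v(S)\le v(T)$ for $S\subseteq T$). A partial allocation is a partition of $M$ into $n+1$ bundles $A_0,A_1,\dots,A_n$, where $A_i$ ($i\ge1$) is given to agent $a_i$ and $A_0$ is unallocated. For $S\subseteq M$ and $e\in S$, $S-e=S\setminus\{e\}$. Residual maximin share: $\mathrm{RMMS}(M,v,n)$ is the largest real $t$ with the following property: for every $0\le k<n$ and every $k$ pairwise disjoint bundles $B_1,\dots,B_k\subseteq M$ with $v(B_j)<t$ for all $j$, the set $M\setminus(B_1\cup\dots\cup B_k)$ can be partitioned into $n-k$ bundles each of value (under $v$) at least $t$. *)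

theory Defs
  imports Complex_Main
begin

definition valuation :: "'a set \<Rightarrow> ('a set \<Rightarrow> real) \<Rightarrow> bool" where
  "valuation M v \<longleftrightarrow> v {} = 0 \<and> (\<forall>S T. S \<subseteq> T \<and> T \<subseteq> M \<longrightarrow> v S \<le> v T)"

definition is_partition :: "'a set \<Rightarrow> nat set \<Rightarrow> (nat \<Rightarrow> 'a set) \<Rightarrow> bool" where
  "is_partition X I P \<longleftrightarrow>
     (\<forall>i\<in>I. \<forall>j\<in>I. i \<noteq> j \<longrightarrow> P i \<inter> P j = {}) \<and> (\<Union>i\<in>I. P i) = X"

definition rmms_prop :: "'a set \<Rightarrow> ('a set \<Rightarrow> real) \<Rightarrow> nat \<Rightarrow> real \<Rightarrow> bool" where
  "rmms_prop M v n t \<longleftrightarrow>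
     (\<forall>k<n. \<forall>B :: nat \<Rightarrow> 'a set.
        (\<forall>j\<in>{1..k}. B j \<subseteq> M \<and> v (B j) < t) \<and>
        (\<forall>i\<in>{1..k}. \<forall>j\<in>{1..k}. i \<noteq> j \<longrightarrow> B i \<inter> B j = {})
        \<longrightarrow> (\<exists>P. is_partition (M - (\<Union>j\<in>{1..k}. B j)) {1..n-k} P \<and>
                  (\<forall>i\<in>{1..n-k}. t \<le> v (P i))))"

definition RMMS :: "'a set \<Rightarrow> ('a set \<Rightarrow> real) \<Rightarrow> nat \<Rightarrow> real" where
  "RMMS M v n = (GREATEST t. rmms_prop M v n t)"

text \<open>Partial allocation: A 0 unallocated, A i given to agent i (1 \<le> i \<le> n).\<close>
definition partial_allocation :: "'a set \<Rightarrow> nat \<Rightarrow> (nat \<Rightarrow> 'a set) \<Rightarrow> bool" where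
  "partial_allocation M n A \<longleftrightarrow> is_partition M {0..n} A"

definition EFX :: "nat \<Rightarrow> (nat \<Rightarrow> 'a set \<Rightarrow> real) \<Rightarrow> (nat \<Rightarrow> 'a set) \<Rightarrow> bool" where
  "EFX n v A \<longleftrightarrow> (\<forall>i\<in>{1..n}. \<forall>j\<in>{1..n}. i \<noteq> j \<longrightarrow>
     (\<forall>e\<in>A j. v i (A j - {e}) \<le> v i (A i)))"

end

theory Submission
  imports Defs
begin

lemma hall:
  assumes "finite J" "\<forall>j\<in>J. finite (A j)" "\<forall>C\<subseteq>J. card C \<le> card (\<Union>(A ` C))"
  shows "\<exists>f. inj_on f J \<and> (\<forall>j\<in>J. f j \<in> A j)"
  using assms
proof (induction "card J" arbitrary: J A rule: less_induct)
  case less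
  show ?case
  proof (cases "J = {}")
    case True then show ?thesis by auto
  next
    case Jne: False
    show ?thesis
    proof (cases "\<exists>C. C \<noteq> {} \<and> C \<subset> J \<and> card (\<Union>(A ` C)) = card C")
      case True
      then obtain C where C: "C \<noteq> {}" "C \<subset> J" "card (\<Union>(A ` C)) = card C" by blast
      have fC: "finite C" using C(2) less.prems(1) finite_subset by blast
      have "card C < card J" using C(2) less.prems(1) psubset_card_mono by blast
      then obtain f1 where f1: "inj_on f1 C" "\<forall>j\<in>C. f1 j \<in> A j"
        using less.hyps[of C A] less.prems fC C(2) by force
      define A' where "A' = (\<lambda>j. A j - \<Union>(A ` C))"
      have fJC: "finite (J - C)" using less.prems(1) by blast
      have "J - C \<subset> J" using C by blast
      then have "card (J - C) < card J" using less.prems(1) psubset_card_mono by blast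
      moreover have "\<forall>D\<subseteq>J - C. card D \<le> card (\<Union>(A' ` D))"
      proof (intro allI impI)
        fix D assume D: "D \<subseteq> J - C"
        have DC: "D \<union> C \<subseteq> J" using D C(2) by blast
        have fin: "finite (\<Union>(A ` (D \<union> C)))" using less.prems(1,2) DC
          by (intro finite_UN_I) (auto intro: finite_subset)
        have eq: "\<Union>(A' ` D) = \<Union>(A ` (D \<union> C)) - \<Union>(A ` C)" unfolding A'_def by auto
        have "card (\<Union>(A' ` D)) = card (\<Union>(A ` (D \<union> C))) - card (\<Union>(A ` C))"
          unfolding eq by (rule card_Diff_subset) (use fin in \<open>auto intro: finite_subset\<close>)
        moreover have "card (D \<union> C) \<le> card (\<Union>(A ` (D \<union> C)))"
          using less.prems(3) DC by blast
        moreover have "card (D \<union> C) = card D + card C"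
          using D fC fJC by (intro card_Un_disjoint) (auto intro: finite_subset)
        ultimately show "card D \<le> card (\<Union>(A' ` D))" using C(3) by linarith
      qed
      moreover have "\<forall>j\<in>J - C. finite (A' j)" using less.prems(2) unfolding A'_def by auto
      ultimately obtain f2 where f2: "inj_on f2 (J - C)" "\<forall>j\<in>J - C. f2 j \<in> A' j"
        using less.hyps[of "J - C" A'] fJC by blast
      define f where "f = (\<lambda>j. if j \<in> C then f1 j else f2 j)"
      have "inj_on f J"
        unfolding inj_on_def
      proof (intro ballI impI)
        fix x y assume xy: "x \<in> J" "y \<in> J" "f x = f y"
        show "x = y"
        proof (cases "x \<in> C"; cases "y \<in> C")
          assume "x \<in> C" "y \<in> C" then show ?thesis using xy f1 unfolding f_def inj_on_def by auto
        next
          assume a: "x \<in> C" "y \<notin> C"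
          then have "f2 y \<in> A' y" using f2 xy by auto
          then have "f2 y \<notin> \<Union>(A ` C)" unfolding A'_def by auto
          moreover have "f1 x \<in> \<Union>(A ` C)" using f1 a by auto
          ultimately show ?thesis using xy a unfolding f_def by auto
        next
          assume a: "x \<notin> C" "y \<in> C"
          then have "f2 x \<in> A' x" using f2 xy by auto
          then have "f2 x \<notin> \<Union>(A ` C)" unfolding A'_def by auto
          moreover have "f1 y \<in> \<Union>(A ` C)" using f1 a by auto
          ultimately show ?thesis using xy a unfolding f_def by auto
        next
          assume "x \<notin> C" "y \<notin> C" then show ?thesis using xy f2 unfolding f_def inj_on_def by auto
        qed
      qed
      moreover have "\<forall>j\<in>J. f j \<in> A j" using f1 f2 unfolding f_def A'_def by auto
      ultimately show ?thesis by blast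
    next
      case False
      then have strict: "\<And>C. C \<noteq> {} \<Longrightarrow> C \<subset> J \<Longrightarrow> card C < card (\<Union>(A ` C))"
        using less.prems(3) by (metis le_neq_implies_less psubset_imp_subset)
      obtain j0 where j0: "j0 \<in> J" using Jne by blast
      have "1 \<le> card (A j0)" using less.prems(3)[rule_format, of "{j0}"] j0 by simp
      then obtain x where x: "x \<in> A j0" by fastforce
      define A' where "A' = (\<lambda>j. A j - {x})"
      have "card (J - {j0}) < card J" using j0 less.prems(1) by (meson card_Diff1_less)
      moreover have "\<forall>D\<subseteq>J - {j0}. card D \<le> card (\<Union>(A' ` D))"
      proof (intro allI impI)
        fix D assume D: "D \<subseteq> J - {j0}"
        show "card D \<le> card (\<Union>(A' ` D))"
        proof (cases "D = {}")
          case True then show ?thesis by simp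
        next
          case False
          have fin: "finite (\<Union>(A ` D))" using less.prems(1,2) D
            by (intro finite_UN_I) (auto intro: finite_subset)
          have "D \<subset> J" using D j0 by auto
          then have "card D < card (\<Union>(A ` D))" using strict False by blast
          moreover have "\<Union>(A' ` D) = \<Union>(A ` D) - {x}" unfolding A'_def by auto
          moreover have "card (\<Union>(A ` D) - {x}) \<ge> card (\<Union>(A ` D)) - 1"
            using diff_card_le_card_Diff[of "{x}" "\<Union>(A ` D)"] by simp
          ultimately show ?thesis by simp
        qed
      qed
      moreover have "\<forall>j\<in>J - {j0}. finite (A' j)" using less.prems(2) unfolding A'_def by auto
      moreover have "finite (J - {j0})" using less.prems(1) by blast
      ultimately obtain f2 where f2: "inj_on f2 (J - {j0})" "\<forall>j\<in>J - {j0}. f2 j \<in> A' j"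
        using less.hyps[of "J - {j0}" A'] by blast
      define f where "f = f2(j0 := x)"
      have "inj_on f J"
        unfolding inj_on_def
      proof (intro ballI impI)
        fix a b assume ab: "a \<in> J" "b \<in> J" "f a = f b"
        show "a = b"
        proof (cases "a = j0"; cases "b = j0")
          assume "a = j0" "b \<noteq> j0" then show ?thesis using ab f2(2) unfolding f_def A'_def by force
        next
          assume "a \<noteq> j0" "b = j0" then show ?thesis using ab f2(2) unfolding f_def A'_def by force
        next
          assume "a \<noteq> j0" "b \<noteq> j0" then show ?thesis using ab f2(1) unfolding f_def inj_on_def by force
        qed simp
      qed
      moreover have "\<forall>j\<in>J. f j \<in> A j" using f2 x unfolding f_def A'_def by auto
      ultimately show ?thesis by blast
    qed
  qed
qed

lemma hall_tight:
  assumes "finite J" "J \<noteq> {}" "\<forall>j\<in>J. A j \<noteq> {}" "\<forall>j\<in>J. finite (A j)"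
    "card (\<Union>(A ` J)) \<le> card J"
  shows "\<exists>C\<subseteq>J. C \<noteq> {} \<and> (\<exists>g. inj_on g (\<Union>(A ` C)) \<and> g ` (\<Union>(A ` C)) \<subseteq> C \<and>
            (\<forall>i\<in>\<Union>(A ` C). i \<in> A (g i)))"
proof -
  let ?P = "\<lambda>C. C \<subseteq> J \<and> C \<noteq> {} \<and> card (\<Union>(A ` C)) \<le> card C"
  have "?P J" using assms by auto
  then obtain C0 where C0: "?P C0" and min: "\<And>C. ?P C \<Longrightarrow> card C0 \<le> card C"
    using ex_has_least_nat[of ?P J card] by blast
  have fC0: "finite C0" using C0 assms(1) finite_subset by blast
  have finN: "\<And>C. C \<subseteq> J \<Longrightarrow> finite (\<Union>(A ` C))"
    using assms(1,4) by (intro finite_UN_I) (auto intro: finite_subset)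
  have eq: "card (\<Union>(A ` C0)) = card C0"
  proof (rule ccontr)
    assume ne: "card (\<Union>(A ` C0)) \<noteq> card C0"
    then have lt: "card (\<Union>(A ` C0)) < card C0" using C0 by auto
    obtain x where x: "x \<in> C0" using C0 by blast
    show False
    proof (cases "C0 - {x} = {}")
      case True
      then have "C0 = {x}" using x by blast
      then have "card (A x) < 1" using lt by simp
      moreover have "finite (A x)" using assms(4) x C0 by blast
      ultimately show False using assms(3) x C0 by auto
    next
      case False
      have "card (\<Union>(A ` (C0 - {x}))) \<le> card (\<Union>(A ` C0))"
        using finN[of C0] C0 by (intro card_mono) auto
      moreover have "card (C0 - {x}) = card C0 - 1" using x fC0 by simp
      ultimately have "?P (C0 - {x})" using lt False C0 by auto
      then have "card C0 \<le> card (C0 - {x})" by (rule min)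
      then show False using \<open>card (C0 - {x}) = card C0 - 1\<close> lt by linarith
    qed
  qed
  have "\<forall>C\<subseteq>C0. card C \<le> card (\<Union>(A ` C))"
  proof (intro allI impI)
    fix C assume C: "C \<subseteq> C0"
    show "card C \<le> card (\<Union>(A ` C))"
    proof (cases "C = {}")
      case True then show ?thesis by simp
    next
      case False
      show ?thesis
      proof (cases "C = C0")
        case True then show ?thesis using eq by simp
      next
        case False
        have lt: "card C < card C0" using C False fC0 by (intro psubset_card_mono) auto
        have "\<not> ?P C"
        proof
          assume "?P C" then have "card C0 \<le> card C" by (rule min)
          then show False using lt by simp
        qed
        then show ?thesis using C C0 \<open>C \<noteq> {}\<close> by auto
      qed
    qed
  qed
  then obtain f where f: "inj_on f C0" "\<forall>j\<in>C0. f j \<in> A j"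
    using hall[of C0 A] fC0 assms(4) C0 by blast
  have sub: "f ` C0 \<subseteq> \<Union>(A ` C0)" using f by auto
  have "card (f ` C0) = card C0" using f(1) by (rule card_image)
  then have img: "f ` C0 = \<Union>(A ` C0)"
    using card_subset_eq[OF finN[of C0] sub] eq C0 by simp
  define g where "g = the_inv_into C0 f"
  have "inj_on g (\<Union>(A ` C0))" unfolding g_def img[symmetric] by (rule inj_on_the_inv_into[OF f(1)])
  moreover have "g ` (\<Union>(A ` C0)) \<subseteq> C0" unfolding g_def img[symmetric]
    using the_inv_into_onto[OF f(1)] by simp
  moreover have "\<forall>i\<in>\<Union>(A ` C0). i \<in> A (g i)"
  proof
    fix i assume i: "i \<in> \<Union>(A ` C0)"
    then have i': "i \<in> f ` C0" using img by simp
    have "g i \<in> C0" unfolding g_def using the_inv_into_into[OF f(1) i'] by simp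
    moreover have "f (g i) = i" unfolding g_def using f_the_inv_into_f[OF f(1) i'] .
    ultimately have "f (g i) \<in> A (g i)" using f(2) by blast
    then show "i \<in> A (g i)" using \<open>f (g i) = i\<close> by simp
  qed
  ultimately show ?thesis using C0 by blast
qed

lemma val_mono: "valuation M w \<Longrightarrow> S \<subseteq> T \<Longrightarrow> T \<subseteq> M \<Longrightarrow> w S \<le> w T"
  unfolding valuation_def by blast

lemma val_nonneg: "valuation M w \<Longrightarrow> S \<subseteq> M \<Longrightarrow> 0 \<le> w S"
  unfolding valuation_def by (metis empty_subsetI)

lemma rmms_zero:
  assumes "valuation M w" "n \<ge> 1"
  shows "rmms_prop M w n 0"
  unfolding rmms_prop_def
proof (intro allI impI)
  fix k B assume k: "k < n" and B: "(\<forall>j\<in>{1..k}. B j \<subseteq> M \<and> w (B j) < 0) \<and>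
        (\<forall>i\<in>{1..k}. \<forall>j\<in>{1..k}. i \<noteq> j \<longrightarrow> B i \<inter> B j = {})"
  have k0: "k = 0"
  proof (rule ccontr)
    assume "k \<noteq> 0"
    then have "(1::nat) \<in> {1..k}" by simp
    then have h: "B 1 \<subseteq> M \<and> w (B 1) < 0" by (rule bspec[OF B[THEN conjunct1]])
    then show False using val_nonneg[OF assms(1), of "B 1"] by linarith
  qed
  define P where "P = (\<lambda>i::nat. if i = 1 then M else {})"
  have "is_partition (M - (\<Union>j\<in>{1..k}. B j)) {1..n-k} P"
    unfolding is_partition_def P_def using k0 assms(2) by auto
  moreover have "\<forall>i\<in>{1..n-k}. 0 \<le> w (P i)"
    unfolding P_def using val_nonneg[OF assms(1)] by auto
  ultimately show "\<exists>P. is_partition (M - (\<Union>j\<in>{1..k}. B j)) {1..n-k} P \<and>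
                  (\<forall>i\<in>{1..n-k}. 0 \<le> w (P i))" by blast
qed

lemma rmms_bound:
  assumes "valuation M w" "n \<ge> 1" "rmms_prop M w n t"
  shows "t \<le> w M"
proof -
  have "\<exists>P. is_partition (M - (\<Union>j\<in>{1..0}. (\<lambda>_. {}) j)) {1..n-0} P \<and>
                  (\<forall>i\<in>{1..n-0}. t \<le> w (P i))"
    using assms(3) assms(2) unfolding rmms_prop_def
    apply (elim allE[of _ 0])
    by simp
  then obtain P where P: "is_partition M {1..n} P" "\<forall>i\<in>{1..n}. t \<le> w (P i)" by auto
  have "P 1 \<subseteq> M" using P(1) assms(2) unfolding is_partition_def by auto
  have "t \<le> w (P 1)" using P(2) assms(2) by simp
  also have "\<dots> \<le> w M" by (rule val_mono[OF assms(1) \<open>P 1 \<subseteq> M\<close> subset_refl])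
  finally show ?thesis .
qed

lemma rmms_lift:
  assumes "finite M" "valuation M w" "n \<ge> 1" "rmms_prop M w n t"
  defines "t' \<equiv> Min {x \<in> w ` Pow M. t \<le> x}"
  shows "rmms_prop M w n t'" "t' \<in> w ` Pow M"
proof -
  let ?S = "{x \<in> w ` Pow M. t \<le> x}"
  have fin: "finite ?S" using assms(1) by simp
  have ne: "?S \<noteq> {}" using rmms_bound[OF assms(2,3,4)] by blast
  have t'S: "t' \<in> ?S" unfolding t'_def using fin ne by (rule Min_in)
  then show "t' \<in> w ` Pow M" by simp
  have minle: "\<And>x. x \<in> ?S \<Longrightarrow> t' \<le> x" unfolding t'_def using fin by simp
  show "rmms_prop M w n t'"
    unfolding rmms_prop_def
  proof (intro allI impI)
    fix k B assume k: "k < n" and B: "(\<forall>j\<in>{1..k}. B j \<subseteq> M \<and> w (B j) < t') \<and>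
        (\<forall>i\<in>{1..k}. \<forall>j\<in>{1..k}. i \<noteq> j \<longrightarrow> B i \<inter> B j = {})"
    have "\<forall>j\<in>{1..k}. B j \<subseteq> M \<and> w (B j) < t"
    proof
      fix j assume j: "j \<in> {1..k}"
      have bj: "B j \<subseteq> M \<and> w (B j) < t'" by (rule bspec[OF B[THEN conjunct1] j])
      then have sub: "B j \<subseteq> M" by blast
      show "B j \<subseteq> M \<and> w (B j) < t"
      proof (rule ccontr)
        assume "\<not> (B j \<subseteq> M \<and> w (B j) < t)"
        then have "w (B j) \<in> ?S" using sub by auto
        then have "t' \<le> w (B j)" by (rule minle)
        then show False using bj by linarith
      qed
    qed
    then have B': "(\<forall>j\<in>{1..k}. B j \<subseteq> M \<and> w (B j) < t) \<and>
        (\<forall>i\<in>{1..k}. \<forall>j\<in>{1..k}. i \<noteq> j \<longrightarrow> B i \<inter> B j = {})"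
      using B[THEN conjunct2] by (rule conjI)
    obtain P where P: "is_partition (M - (\<Union>j\<in>{1..k}. B j)) {1..n-k} P"
      "\<forall>i\<in>{1..n-k}. t \<le> w (P i)"
      using assms(4)[unfolded rmms_prop_def, rule_format, OF k B'] by blast
    have "\<forall>i\<in>{1..n-k}. t' \<le> w (P i)"
    proof
      fix i assume i: "i \<in> {1..n-k}"
      have "P i \<subseteq> M" using P(1) i unfolding is_partition_def by blast
      then have "w (P i) \<in> ?S" using P(2) i by auto
      then show "t' \<le> w (P i)" by (rule minle)
    qed
    then show "\<exists>P. is_partition (M - (\<Union>j\<in>{1..k}. B j)) {1..n-k} P \<and>
                  (\<forall>i\<in>{1..n-k}. t' \<le> w (P i))" using P(1) by blast
  qed
qed

lemma rmms_holds:
  assumes "finite M" "n \<ge> 1" "valuation M w"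
  shows "rmms_prop M w n (RMMS M w n)"
proof -
  let ?S = "{x \<in> w ` Pow M. rmms_prop M w n x}"
  have fin: "finite ?S" using assms(1) by simp
  have ne: "?S \<noteq> {}" using rmms_lift[OF assms(1,3,2) rmms_zero[OF assms(3,2)]] by blast
  define s where "s = Max ?S"
  have sS: "s \<in> ?S" unfolding s_def using fin ne by (rule Max_in)
  have "\<And>y. rmms_prop M w n y \<Longrightarrow> y \<le> s"
  proof -
    fix y assume y: "rmms_prop M w n y"
    let ?y' = "Min {x \<in> w ` Pow M. y \<le> x}"
    have "?y' \<in> ?S" using rmms_lift[OF assms(1,3,2) y] by blast
    then have "?y' \<le> s" unfolding s_def using fin by simp
    moreover have "y \<le> ?y'"
    proof -
      have "{x \<in> w ` Pow M. y \<le> x} \<noteq> {}" using rmms_bound[OF assms(3,2) y] by blast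
      then show ?thesis using assms(1) by simp
    qed
    ultimately show "y \<le> s" by linarith
  qed
  then have "RMMS M w n = s" unfolding RMMS_def using sS by (intro Greatest_equality) auto
  then show ?thesis using sS by simp
qed

lemma residual_partition:
  assumes "rmms_prop M w n \<tau>" "finite S" "card S < n"
    "\<forall>j\<in>S. X j \<subseteq> M \<and> w (X j) < \<tau>"
    "\<forall>j\<in>S. \<forall>k\<in>S. j \<noteq> k \<longrightarrow> X j \<inter> X k = {}"
  shows "\<exists>P. is_partition (M - \<Union>(X ` S)) {1..n - card S} P \<and> (\<forall>i\<in>{1..n - card S}. \<tau> \<le> w (P i))"
proof -
  obtain h where h: "bij_betw h {1..card S} S" using ex_bij_betw_nat_finite_1[OF assms(2)] by blast
  define B where "B = (\<lambda>j. X (h j))"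
  have hin: "\<And>j. j \<in> {1..card S} \<Longrightarrow> h j \<in> S" using h by (meson bij_betwE)
  have B1: "\<forall>j\<in>{1..card S}. B j \<subseteq> M \<and> w (B j) < \<tau>"
    using assms(4) hin unfolding B_def by blast
  have B2: "\<forall>i\<in>{1..card S}. \<forall>j\<in>{1..card S}. i \<noteq> j \<longrightarrow> B i \<inter> B j = {}"
  proof (intro ballI impI)
    fix i j assume ij: "i \<in> {1..card S}" "j \<in> {1..card S}" "i \<noteq> j"
    then have "h i \<noteq> h j" using h unfolding bij_betw_def inj_on_def by blast
    then show "B i \<inter> B j = {}" unfolding B_def using assms(5) hin ij by blast
  qed
  have U: "(\<Union>j\<in>{1..card S}. B j) = \<Union>(X ` S)"
    unfolding B_def using h by (metis bij_betw_imp_surj_on image_image)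
  show ?thesis
    using assms(1)[unfolded rmms_prop_def, rule_format, OF assms(3) conjI[OF B1 B2]] unfolding U .
qed

lemma batch:
  fixes t :: "nat \<Rightarrow> real" and v :: "nat \<Rightarrow> 'a set \<Rightarrow> real" and U :: "nat set"
  assumes finM: "finite M" and U: "finite U" "card U \<ge> 1" and R: "R \<subseteq> M"
    and P: "is_partition R {1..card U} P" "\<forall>j\<in>{1..card U}. \<exists>i\<in>U. t i \<le> v i (P j)"
  shows "\<exists>T Y. T \<subseteq> U \<and> T \<noteq> {} \<and> (\<forall>i\<in>T. Y i \<subseteq> R) \<and>
     (\<forall>i\<in>T. \<forall>i'\<in>T. i \<noteq> i' \<longrightarrow> Y i \<inter> Y i' = {}) \<and>
     (\<forall>i\<in>T. t i \<le> v i (Y i)) \<and>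
     (\<forall>i'\<in>U - T. \<forall>i\<in>T. v i' (Y i) < t i') \<and>
     (\<forall>i'\<in>U. \<forall>i\<in>T. \<forall>e\<in>Y i. v i' (Y i - {e}) < t i')"
proof -
  let ?J = "{1..card U}"
  have Psub: "\<And>j. j \<in> ?J \<Longrightarrow> P j \<subseteq> R" using P(1) unfolding is_partition_def by blast
  have "\<forall>j\<in>?J. \<exists>Q. Q \<subseteq> P j \<and> (\<exists>i\<in>U. t i \<le> v i Q) \<and>
          (\<forall>Q'. Q' \<subseteq> P j \<longrightarrow> card Q' < card Q \<longrightarrow> (\<forall>i\<in>U. v i Q' < t i))"
  proof
    fix j assume j: "j \<in> ?J"
    let ?Pr = "\<lambda>Q. Q \<subseteq> P j \<and> (\<exists>i\<in>U. t i \<le> v i Q)"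
    have "?Pr (P j)" using P(2) j by blast
    then obtain Q where Q: "?Pr Q" "\<And>Q'. ?Pr Q' \<Longrightarrow> card Q \<le> card Q'"
      using ex_has_least_nat[of ?Pr "P j" card] by blast
    have "\<forall>Q'. Q' \<subseteq> P j \<longrightarrow> card Q' < card Q \<longrightarrow> (\<forall>i\<in>U. v i Q' < t i)"
    proof (intro allI impI ballI)
      fix Q' i assume a: "Q' \<subseteq> P j" "card Q' < card Q" "i \<in> U"
      show "v i Q' < t i"
      proof (rule ccontr)
        assume "\<not> v i Q' < t i"
        then have "?Pr Q'" using a by force
        then have "card Q \<le> card Q'" by (rule Q(2))
        then show False using a(2) by simp
      qed
    qed
    then show "\<exists>Q. Q \<subseteq> P j \<and> (\<exists>i\<in>U. t i \<le> v i Q) \<and>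
          (\<forall>Q'. Q' \<subseteq> P j \<longrightarrow> card Q' < card Q \<longrightarrow> (\<forall>i\<in>U. v i Q' < t i))" using Q(1) by blast
  qed
  then obtain Q where Q: "\<forall>j\<in>?J. Q j \<subseteq> P j \<and> (\<exists>i\<in>U. t i \<le> v i (Q j)) \<and>
          (\<forall>Q'. Q' \<subseteq> P j \<longrightarrow> card Q' < card (Q j) \<longrightarrow> (\<forall>i\<in>U. v i Q' < t i))"
    by (rule bchoice[THEN exE]) blast
  have Qj: "\<And>j. j \<in> ?J \<Longrightarrow> Q j \<subseteq> P j \<and> (\<exists>i\<in>U. t i \<le> v i (Q j)) \<and>
          (\<forall>Q'. Q' \<subseteq> P j \<longrightarrow> card Q' < card (Q j) \<longrightarrow> (\<forall>i\<in>U. v i Q' < t i))"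
    by (rule bspec[OF Q])
  have Q1: "\<And>j. j \<in> ?J \<Longrightarrow> Q j \<subseteq> P j" by (rule conjunct1[OF Qj])
  have Q2: "\<And>j. j \<in> ?J \<Longrightarrow> \<exists>i\<in>U. t i \<le> v i (Q j)" by (rule conjunct1[OF conjunct2[OF Qj]])
  have Q3: "\<And>j Q' i. j \<in> ?J \<Longrightarrow> Q' \<subseteq> P j \<Longrightarrow> card Q' < card (Q j) \<Longrightarrow> i \<in> U \<Longrightarrow> v i Q' < t i"
  proof -
    fix j Q' i assume a: "j \<in> ?J" "Q' \<subseteq> P j" "card Q' < card (Q j)" "i \<in> U"
    have "\<forall>Q'. Q' \<subseteq> P j \<longrightarrow> card Q' < card (Q j) \<longrightarrow> (\<forall>i\<in>U. v i Q' < t i)"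
      by (rule conjunct2[OF conjunct2[OF Qj[OF a(1)]]])
    then show "v i Q' < t i" using a(2,3,4) by blast
  qed
  have Qsub: "\<And>j. j \<in> ?J \<Longrightarrow> Q j \<subseteq> R"
  proof -
    fix j assume j: "j \<in> ?J"
    show "Q j \<subseteq> R" using Q1[OF j] Psub[OF j] by (rule subset_trans)
  qed
  have Qmin: "\<And>j i e. j \<in> ?J \<Longrightarrow> i \<in> U \<Longrightarrow> e \<in> Q j \<Longrightarrow> v i (Q j - {e}) < t i"
  proof -
    fix j i e assume a: "j \<in> ?J" "i \<in> U" "e \<in> Q j"
    have fQ: "finite (Q j)" by (rule finite_subset[OF subset_trans[OF Qsub[OF a(1)] R] finM])
    have c: "card (Q j - {e}) < card (Q j)" using fQ a(3) by (rule card_Diff1_less)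
    have s: "Q j - {e} \<subseteq> P j" using Q1[OF a(1)] by blast
    show "v i (Q j - {e}) < t i" by (rule Q3[OF a(1) s c a(2)])
  qed
  define A where "A = (\<lambda>j. {i\<in>U. t i \<le> v i (Q j)})"
  have h1: "finite ?J" by simp
  have h2: "?J \<noteq> {}" using U(2) by simp
  have h3: "\<forall>j\<in>?J. A j \<noteq> {}"
  proof
    fix j assume j: "j \<in> ?J"
    obtain i where "i \<in> U" "t i \<le> v i (Q j)" using Q2[OF j] by blast
    then show "A j \<noteq> {}" unfolding A_def by blast
  qed
  have h4: "\<forall>j\<in>?J. finite (A j)" unfolding A_def using U(1) by simp
  have "\<Union>(A ` ?J) \<subseteq> U" unfolding A_def by blast
  then have "card (\<Union>(A ` ?J)) \<le> card U" by (rule card_mono[OF U(1)])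
  then have h5: "card (\<Union>(A ` ?J)) \<le> card ?J" by simp
  note HT = hall_tight[OF h1 h2 h3 h4 h5]
  obtain C where C0: "C \<subseteq> ?J \<and> C \<noteq> {} \<and> (\<exists>g. inj_on g (\<Union>(A ` C)) \<and> g ` (\<Union>(A ` C)) \<subseteq> C \<and>
            (\<forall>i\<in>\<Union>(A ` C). i \<in> A (g i)))" using HT ..
  have C: "C \<subseteq> ?J" "C \<noteq> {}" using C0 by (rule conjunct1, rule conjunct1[OF conjunct2])
  obtain g where g0: "inj_on g (\<Union>(A ` C)) \<and> g ` (\<Union>(A ` C)) \<subseteq> C \<and>
            (\<forall>i\<in>\<Union>(A ` C). i \<in> A (g i))" using C0[THEN conjunct2, THEN conjunct2] ..
  have g: "inj_on g (\<Union>(A ` C))" "g ` (\<Union>(A ` C)) \<subseteq> C" "\<forall>i\<in>\<Union>(A ` C). i \<in> A (g i)"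
    using g0 by (rule conjunct1, rule conjunct1[OF conjunct2], rule conjunct2[OF conjunct2])
  define T where "T = \<Union>(A ` C)"
  define Y where "Y = (\<lambda>i. Q (g i))"
  have gJ: "\<And>i. i \<in> T \<Longrightarrow> g i \<in> ?J" using g(2) C(1) unfolding T_def by blast
  have "T \<subseteq> U" unfolding T_def A_def by blast
  moreover have "T \<noteq> {}"
  proof -
    obtain j where "j \<in> C" using C(2) by blast
    then have "A j \<noteq> {}" unfolding A_def using Q2 C(1) by blast
    then show ?thesis unfolding T_def using \<open>j \<in> C\<close> by blast
  qed
  moreover have "\<forall>i\<in>T. Y i \<subseteq> R" unfolding Y_def using gJ Qsub by blast
  moreover have "\<forall>i\<in>T. \<forall>i'\<in>T. i \<noteq> i' \<longrightarrow> Y i \<inter> Y i' = {}"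
  proof (intro ballI impI)
    fix i i' assume a: "i \<in> T" "i' \<in> T" "i \<noteq> i'"
    then have "g i \<noteq> g i'" using g(1) unfolding T_def inj_on_def by blast
    moreover have "Q (g i) \<subseteq> P (g i)" "Q (g i') \<subseteq> P (g i')" using Q1 gJ a by blast+
    moreover have "P (g i) \<inter> P (g i') = {}" using P(1) gJ a \<open>g i \<noteq> g i'\<close>
      unfolding is_partition_def by blast
    ultimately show "Y i \<inter> Y i' = {}" unfolding Y_def by blast
  qed
  moreover have "\<forall>i\<in>T. t i \<le> v i (Y i)" using g(3) unfolding T_def Y_def A_def by blast
  moreover have "\<forall>i'\<in>U - T. \<forall>i\<in>T. v i' (Y i) < t i'"
  proof (intro ballI)
    fix i' i assume a: "i' \<in> U - T" "i \<in> T"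
    then have "g i \<in> C" using g(2) unfolding T_def by blast
    then have "i' \<notin> A (g i)" using a(1) unfolding T_def by blast
    then show "v i' (Y i) < t i'" using a(1) unfolding A_def Y_def by auto
  qed
  moreover have "\<forall>i'\<in>U. \<forall>i\<in>T. \<forall>e\<in>Y i. v i' (Y i - {e}) < t i'"
    unfolding Y_def using Qmin gJ by blast
  ultimately show ?thesis by blast
qed

definition good :: "'a set \<Rightarrow> nat \<Rightarrow> (nat \<Rightarrow> 'a set \<Rightarrow> real) \<Rightarrow> (nat \<Rightarrow> real) \<Rightarrow> nat set \<Rightarrow> (nat \<Rightarrow> 'a set) \<Rightarrow> bool" where
  "good M n v t S X \<longleftrightarrow> S \<subseteq> {1..n} \<and> (\<forall>j\<in>S. X j \<subseteq> M) \<and>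
     (\<forall>j\<in>S. \<forall>k\<in>S. j \<noteq> k \<longrightarrow> X j \<inter> X k = {}) \<and>
     (\<forall>j\<in>S. t j \<le> v j (X j)) \<and>
     (\<forall>j\<in>S. \<forall>k\<in>S. j \<noteq> k \<longrightarrow> (\<forall>e\<in>X k. v j (X k - {e}) \<le> v j (X j))) \<and>
     (\<forall>i\<in>{1..n} - S. \<forall>k\<in>S. v i (X k) < t i)"

definition phi :: "'a set \<Rightarrow> (nat \<Rightarrow> 'a set \<Rightarrow> real) \<Rightarrow> nat set \<Rightarrow> (nat \<Rightarrow> 'a set) \<Rightarrow> nat" where
  "phi M v S X = (\<Sum>j\<in>S. Suc (card {Y \<in> Pow M. v j Y < v j (X j)}))"

lemma goodD:
  assumes "good M n v t S X"
  shows "S \<subseteq> {1..n}" "\<forall>j\<in>S. X j \<subseteq> M"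
     "\<forall>j\<in>S. \<forall>k\<in>S. j \<noteq> k \<longrightarrow> X j \<inter> X k = {}"
     "\<forall>j\<in>S. t j \<le> v j (X j)"
     "\<forall>j\<in>S. \<forall>k\<in>S. j \<noteq> k \<longrightarrow> (\<forall>e\<in>X k. v j (X k - {e}) \<le> v j (X j))"
     "\<forall>i\<in>{1..n} - S. \<forall>k\<in>S. v i (X k) < t i"
  using assms unfolding good_def by blast+

lemma goodI:
  assumes "S \<subseteq> {1..n}" "\<forall>j\<in>S. X j \<subseteq> M"
     "\<forall>j\<in>S. \<forall>k\<in>S. j \<noteq> k \<longrightarrow> X j \<inter> X k = {}"
     "\<forall>j\<in>S. t j \<le> v j (X j)"
     "\<forall>j\<in>S. \<forall>k\<in>S. j \<noteq> k \<longrightarrow> (\<forall>e\<in>X k. v j (X k - {e}) \<le> v j (X j))"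
     "\<forall>i\<in>{1..n} - S. \<forall>k\<in>S. v i (X k) < t i"
  shows "good M n v t S X"
  unfolding good_def using assms by (intro conjI)

lemma phi_bound:
  assumes "finite M" "good M n v t S X"
  shows "phi M v S X \<le> n * Suc (card (Pow M))"
proof -
  have each: "\<And>j. j \<in> S \<Longrightarrow> Suc (card {Y \<in> Pow M. v j Y < v j (X j)}) \<le> Suc (card (Pow M))"
  proof -
    fix j assume "j \<in> S"
    have "card {Y \<in> Pow M. v j Y < v j (X j)} \<le> card (Pow M)"
      using assms(1) by (intro card_mono) auto
    then show "Suc (card {Y \<in> Pow M. v j Y < v j (X j)}) \<le> Suc (card (Pow M))" by simp
  qed
  have "phi M v S X \<le> of_nat (card S) * Suc (card (Pow M))"
    unfolding phi_def by (rule sum_bounded_above[OF each])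
  then have "phi M v S X \<le> card S * Suc (card (Pow M))" by simp
  moreover have "card S \<le> n"
    using card_mono[OF _ goodD(1)[OF assms(2)]] by simp
  ultimately show ?thesis by (meson le_trans mult_le_mono1)
qed

lemma step:
  fixes M :: "'a set" and v :: "nat \<Rightarrow> 'a set \<Rightarrow> real" and t :: "nat \<Rightarrow> real"
  assumes finM: "finite M" and val: "\<forall>i\<in>{1..n}. valuation M (v i)"
    and rm: "\<forall>i\<in>{1..n}. rmms_prop M (v i) n (t i)"
    and G: "good M n v t S X" and ne: "S \<noteq> {1..n}"
  shows "\<exists>S' X'. good M n v t S' X' \<and> phi M v S X < phi M v S' X'"
proof -
  note G1 = goodD(1)[OF G] and G2 = goodD(2)[OF G] and G3 = goodD(3)[OF G]
    and G4 = goodD(4)[OF G] and G5 = goodD(5)[OF G] and G6 = goodD(6)[OF G]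
  have mono: "\<And>i A B. i \<in> {1..n} \<Longrightarrow> A \<subseteq> B \<Longrightarrow> B \<subseteq> M \<Longrightarrow> v i A \<le> v i B"
    using val val_mono by blast
  define U where "U = {1..n} - S"
  have finS: "finite S" using G1 finite_subset by blast
  have finU: "finite U" unfolding U_def by simp
  have Une: "U \<noteq> {}" using G1 ne unfolding U_def by blast
  have cardU: "card U = n - card S" unfolding U_def using G1 finS by (simp add: card_Diff_subset)
  have cardS: "card S < n"
  proof -
    have "S \<subset> {1..n}" using G1 ne by blast
    then have "card S < card {1..n}" by (rule psubset_card_mono[rotated]) simp
    then show ?thesis by simp
  qed
  have cardU1: "card U \<ge> 1" using cardU cardS by simp
  obtain a where a: "a \<in> U" using Une by blast
  have aN: "a \<in> {1..n}" using a unfolding U_def by blast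
  define R where "R = M - \<Union>(X ` S)"
  have RM: "R \<subseteq> M" unfolding R_def by blast
  have Rdisj: "\<And>k. k \<in> S \<Longrightarrow> R \<inter> X k = {}" unfolding R_def by blast
  have "\<forall>j\<in>S. X j \<subseteq> M \<and> v a (X j) < t a" using G2 G6 a unfolding U_def by blast
  then obtain P where P: "is_partition R {1..n - card S} P" "\<forall>i\<in>{1..n - card S}. t a \<le> v a (P i)"
    using residual_partition[OF bspec[OF rm aN] finS cardS _ G3] unfolding R_def by blast
  have P1: "is_partition R {1..card U} P" using P(1) cardU by simp
  have P2: "\<forall>j\<in>{1..card U}. \<exists>i\<in>U. t i \<le> v i (P j)" using P(2) cardU a by auto
  obtain T Y where TU: "T \<subseteq> U" and Tne: "T \<noteq> {}" and YR: "\<forall>i\<in>T. Y i \<subseteq> R"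
    and Ydisj: "\<forall>i\<in>T. \<forall>i'\<in>T. i \<noteq> i' \<longrightarrow> Y i \<inter> Y i' = {}"
    and Yval: "\<forall>i\<in>T. t i \<le> v i (Y i)"
    and Yout: "\<forall>i'\<in>U - T. \<forall>i\<in>T. v i' (Y i) < t i'"
    and Ymin: "\<forall>i'\<in>U. \<forall>i\<in>T. \<forall>e\<in>Y i. v i' (Y i - {e}) < t i'"
    using batch[OF finM finU cardU1 RM P1 P2] by blast
  have UN: "U \<subseteq> {1..n}" unfolding U_def by blast
  have TS: "T \<inter> S = {}" using TU unfolding U_def by blast
  show ?thesis
  proof (cases "\<exists>j\<in>S. \<exists>i\<in>T. \<exists>e\<in>Y i. v j (X j) < v j (Y i - {e})")
    case True
    let ?Cand = "\<lambda>Z. (\<exists>i\<in>T. \<exists>e\<in>Y i. Z \<subseteq> Y i - {e}) \<and> (\<exists>j\<in>S. v j (X j) < v j Z)"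
    obtain j1 i1 e1 where "j1 \<in> S" "i1 \<in> T" "e1 \<in> Y i1" "v j1 (X j1) < v j1 (Y i1 - {e1})"
      using True by blast
    then have c1: "?Cand (Y i1 - {e1})" by blast
    obtain Z where Z: "?Cand Z" and Zmin: "\<And>Z'. ?Cand Z' \<Longrightarrow> card Z \<le> card Z'"
      using ex_has_least_nat[of ?Cand "Y i1 - {e1}" card, OF c1] by blast
    obtain i0 e0 where i0: "i0 \<in> T" "e0 \<in> Y i0" "Z \<subseteq> Y i0 - {e0}" using Z by blast
    obtain j0 where j0: "j0 \<in> S" "v j0 (X j0) < v j0 Z" using Z by blast
    have ZR: "Z \<subseteq> R" using i0 YR by blast
    have ZM: "Z \<subseteq> M" using ZR RM by blast
    have finZ: "finite Z" using ZM finM finite_subset by blast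
    have Znoenvy: "\<And>j e. j \<in> S \<Longrightarrow> e \<in> Z \<Longrightarrow> v j (Z - {e}) \<le> v j (X j)"
    proof -
      fix j e assume je: "j \<in> S" "e \<in> Z"
      have c: "card (Z - {e}) < card Z" using finZ je(2) by (rule card_Diff1_less)
      show "v j (Z - {e}) \<le> v j (X j)"
      proof (rule ccontr)
        assume "\<not> v j (Z - {e}) \<le> v j (X j)"
        then have "v j (X j) < v j (Z - {e})" by simp
        moreover have "Z - {e} \<subseteq> Y i0 - {e0}" using i0 by blast
        ultimately have "?Cand (Z - {e})" using je(1) i0(1,2) by blast
        then have "card Z \<le> card (Z - {e})" by (rule Zmin)
        then show False using c by simp
      qed
    qed
    define X' where "X' = X(j0 := Z)"
    have "good M n v t S X'"
    proof (rule goodI)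
      show "S \<subseteq> {1..n}" by (rule G1)
      show "\<forall>j\<in>S. X' j \<subseteq> M" unfolding X'_def using G2 ZM by simp
      show "\<forall>j\<in>S. \<forall>k\<in>S. j \<noteq> k \<longrightarrow> X' j \<inter> X' k = {}"
      proof (intro ballI impI)
        fix j k assume jk: "j \<in> S" "k \<in> S" "j \<noteq> k"
        show "X' j \<inter> X' k = {}"
        proof (cases "j = j0")
          case True
          then show ?thesis unfolding X'_def using jk ZR Rdisj[of k] by auto
        next
          case False
          show ?thesis
          proof (cases "k = j0")
            case True
            then show ?thesis unfolding X'_def using jk ZR Rdisj[of j] by auto
          next
            case False
            then show ?thesis unfolding X'_def using jk \<open>j \<noteq> j0\<close> G3 by auto
          qed
        qed
      qed
      show "\<forall>j\<in>S. t j \<le> v j (X' j)"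
      proof
        fix j assume j: "j \<in> S"
        show "t j \<le> v j (X' j)"
        proof (cases "j = j0")
          case True
          then show ?thesis unfolding X'_def using G4 j0 by force
        next
          case False
          then show ?thesis unfolding X'_def using G4 j by simp
        qed
      qed
      show "\<forall>j\<in>S. \<forall>k\<in>S. j \<noteq> k \<longrightarrow> (\<forall>e\<in>X' k. v j (X' k - {e}) \<le> v j (X' j))"
      proof (intro ballI impI)
        fix j k e assume jk: "j \<in> S" "k \<in> S" "j \<noteq> k" and e: "e \<in> X' k"
        show "v j (X' k - {e}) \<le> v j (X' j)"
        proof (cases "k = j0")
          case True
          then have "e \<in> Z" "X' k = Z" "X' j = X j" using e jk unfolding X'_def by auto
          then show ?thesis using Znoenvy[OF jk(1)] by simp
        next
          case kne: False
          then have Xk: "X' k = X k" unfolding X'_def by simp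
          have old: "v j (X k - {e}) \<le> v j (X j)" using G5 jk e Xk by auto
          show ?thesis
          proof (cases "j = j0")
            case True
            then show ?thesis using old j0 Xk unfolding X'_def by simp
          next
            case False
            then show ?thesis using old Xk unfolding X'_def by simp
          qed
        qed
      qed
      show "\<forall>i\<in>{1..n} - S. \<forall>k\<in>S. v i (X' k) < t i"
      proof (intro ballI)
        fix i k assume i: "i \<in> {1..n} - S" and k: "k \<in> S"
        show "v i (X' k) < t i"
        proof (cases "k = j0")
          case True
          have iU: "i \<in> U" using i unfolding U_def by blast
          have "Y i0 - {e0} \<subseteq> M" using i0 YR RM by blast
          then have "v i Z \<le> v i (Y i0 - {e0})" using mono[of i Z "Y i0 - {e0}"] i0 i by blast
          moreover have "v i (Y i0 - {e0}) < t i" using Ymin iU i0 by blast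
          ultimately show ?thesis using True unfolding X'_def by simp
        next
          case False
          then show ?thesis unfolding X'_def using G6 i k by simp
        qed
      qed
    qed
    moreover have "phi M v S X < phi M v S X'"
      unfolding phi_def
    proof (rule sum_strict_mono_ex1[OF finS])
      show "\<forall>j\<in>S. Suc (card {Ya \<in> Pow M. v j Ya < v j (X j)}) \<le> Suc (card {Ya \<in> Pow M. v j Ya < v j (X' j)})"
      proof
        fix j assume j: "j \<in> S"
        show "Suc (card {Ya \<in> Pow M. v j Ya < v j (X j)}) \<le> Suc (card {Ya \<in> Pow M. v j Ya < v j (X' j)})"
        proof (cases "j = j0")
          case True
          have "{Ya \<in> Pow M. v j Ya < v j (X j)} \<subseteq> {Ya \<in> Pow M. v j Ya < v j (X' j)}"
            using True j0 unfolding X'_def by auto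
          then have "card {Ya \<in> Pow M. v j Ya < v j (X j)} \<le> card {Ya \<in> Pow M. v j Ya < v j (X' j)}"
            by (rule card_mono[rotated]) (simp add: finM)
          then show ?thesis by simp
        next
          case False
          then show ?thesis unfolding X'_def by simp
        qed
      qed
      have sub: "{Ya \<in> Pow M. v j0 Ya < v j0 (X j0)} \<subset> {Ya \<in> Pow M. v j0 Ya < v j0 (X' j0)}"
      proof
        show "{Ya \<in> Pow M. v j0 Ya < v j0 (X j0)} \<subseteq> {Ya \<in> Pow M. v j0 Ya < v j0 (X' j0)}"
          using j0 unfolding X'_def by auto
        have "X j0 \<in> {Ya \<in> Pow M. v j0 Ya < v j0 (X' j0)}" using j0 G2 unfolding X'_def by auto
        moreover have "X j0 \<notin> {Ya \<in> Pow M. v j0 Ya < v j0 (X j0)}" by simp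
        ultimately show "{Ya \<in> Pow M. v j0 Ya < v j0 (X j0)} \<noteq> {Ya \<in> Pow M. v j0 Ya < v j0 (X' j0)}" by blast
      qed
      have "card {Ya \<in> Pow M. v j0 Ya < v j0 (X j0)} < card {Ya \<in> Pow M. v j0 Ya < v j0 (X' j0)}"
        by (rule psubset_card_mono[OF _ sub]) (simp add: finM)
      then show "\<exists>j\<in>S. Suc (card {Ya \<in> Pow M. v j Ya < v j (X j)}) < Suc (card {Ya \<in> Pow M. v j Ya < v j (X' j)})"
        using j0(1) by auto
    qed
    ultimately show ?thesis by blast
  next
    case False
    then have noenvy: "\<And>j i e. j \<in> S \<Longrightarrow> i \<in> T \<Longrightarrow> e \<in> Y i \<Longrightarrow> v j (Y i - {e}) \<le> v j (X j)"
      by (meson not_le)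
    define S' where "S' = S \<union> T"
    define X' where "X' = (\<lambda>i. if i \<in> T then Y i else X i)"
    have "good M n v t S' X'"
    proof (rule goodI)
      show "S' \<subseteq> {1..n}" unfolding S'_def using G1 TU UN by blast
      show "\<forall>j\<in>S'. X' j \<subseteq> M"
      proof
        fix j assume j: "j \<in> S'"
        show "X' j \<subseteq> M"
        proof (cases "j \<in> T")
          case True
          then show ?thesis unfolding X'_def using bspec[OF YR True] RM by auto
        next
          case False
          then have "j \<in> S" using j unfolding S'_def by blast
          then show ?thesis unfolding X'_def using False bspec[OF G2] by auto
        qed
      qed
      show "\<forall>j\<in>S'. \<forall>k\<in>S'. j \<noteq> k \<longrightarrow> X' j \<inter> X' k = {}"
      proof (intro ballI impI)
        fix j k assume jk: "j \<in> S'" "k \<in> S'" "j \<noteq> k"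
        show "X' j \<inter> X' k = {}"
        proof (cases "j \<in> T")
          case jT: True
          show ?thesis
          proof (cases "k \<in> T")
            case True
            then show ?thesis unfolding X'_def using jT jk Ydisj by simp
          next
            case False
            then have "k \<in> S" using jk unfolding S'_def by blast
            then show ?thesis unfolding X'_def using jT False YR Rdisj[of k] by auto
          qed
        next
          case jT: False
          then have jS: "j \<in> S" using jk unfolding S'_def by blast
          show ?thesis
          proof (cases "k \<in> T")
            case True
            then show ?thesis unfolding X'_def using jT jS YR Rdisj[of j] by auto
          next
            case False
            then have "k \<in> S" using jk unfolding S'_def by blast
            then show ?thesis unfolding X'_def using jT False jS jk G3 by simp
          qed
        qed
      qed
      show "\<forall>j\<in>S'. t j \<le> v j (X' j)"
        unfolding S'_def X'_def using G4 Yval TS by auto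
      show "\<forall>j\<in>S'. \<forall>k\<in>S'. j \<noteq> k \<longrightarrow> (\<forall>e\<in>X' k. v j (X' k - {e}) \<le> v j (X' j))"
      proof (intro ballI impI)
        fix j k e assume jk: "j \<in> S'" "k \<in> S'" "j \<noteq> k" and e: "e \<in> X' k"
        show "v j (X' k - {e}) \<le> v j (X' j)"
        proof (cases "j \<in> T")
          case jT: True
          have jU: "j \<in> U" using jT TU by blast
          have jN: "j \<in> {1..n}" using jU UN by blast
          have tj: "t j \<le> v j (X' j)" using Yval jT unfolding X'_def by simp
          show ?thesis
          proof (cases "k \<in> T")
            case True
            then have "v j (Y k - {e}) < t j" using Ymin jU e unfolding X'_def by simp
            then show ?thesis using tj True unfolding X'_def by simp
          next
            case False
            then have kS: "k \<in> S" using jk unfolding S'_def by blast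
            have "v j (X k - {e}) \<le> v j (X k)" using mono[OF jN, of "X k - {e}" "X k"] G2 kS by blast
            moreover have "v j (X k) < t j" using G6 jU kS unfolding U_def by blast
            ultimately show ?thesis using tj False unfolding X'_def by simp
          qed
        next
          case jT: False
          then have jS: "j \<in> S" using jk unfolding S'_def by blast
          show ?thesis
          proof (cases "k \<in> T")
            case True
            then show ?thesis using noenvy[OF jS True] e jT unfolding X'_def by simp
          next
            case False
            then have kS: "k \<in> S" using jk unfolding S'_def by blast
            then show ?thesis using G5 jS jk e jT False unfolding X'_def by simp
          qed
        qed
      qed
      show "\<forall>i\<in>{1..n} - S'. \<forall>k\<in>S'. v i (X' k) < t i"
      proof (intro ballI)
        fix i k assume i: "i \<in> {1..n} - S'" and k: "k \<in> S'"
        have iUT: "i \<in> U - T" using i unfolding S'_def U_def by blast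
        show "v i (X' k) < t i"
        proof (cases "k \<in> T")
          case True
          then show ?thesis using Yout iUT unfolding X'_def by simp
        next
          case False
          then have "k \<in> S" using k unfolding S'_def by blast
          then show ?thesis using G6 i False unfolding X'_def S'_def by simp
        qed
      qed
    qed
    moreover have "phi M v S X < phi M v S' X'"
    proof -
      have finT: "finite T" using TU finU finite_subset by blast
      have "phi M v S' X' = phi M v S X' + phi M v T X'"
        unfolding phi_def S'_def by (rule sum.union_disjoint[OF finS finT]) (use TS in blast)
      moreover have "phi M v S X' = phi M v S X"
        unfolding phi_def X'_def using TS by (intro sum.cong) auto
      moreover have "phi M v T X' > 0"
      proof -
        obtain i where "i \<in> T" using Tne by blast
        then show ?thesis unfolding phi_def using finT by (simp add: sum_pos2[where i=i] )
      qed
      ultimately show ?thesis by simp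
    qed
    ultimately show ?thesis by blast
  qed
qed

theorem mainTheorem6:
  fixes M :: "'a set" and n :: nat and v :: "nat \<Rightarrow> 'a set \<Rightarrow> real"
  assumes "finite M" and "n \<ge> 1"
    and "\<forall>i\<in>{1..n}. valuation M (v i)"
  shows "\<exists>A. partial_allocation M n A \<and>
             (\<forall>i\<in>{1..n}. RMMS M (v i) n \<le> v i (A i)) \<and>
             EFX n v A"
proof -
  define t where "t = (\<lambda>i. RMMS M (v i) n)"
  have rm: "\<forall>i\<in>{1..n}. rmms_prop M (v i) n (t i)"
    unfolding t_def using rmms_holds[OF assms(1,2)] assms(3) by blast
  let ?P = "\<lambda>p. good M n v t (fst p) (snd p)"
  let ?f = "\<lambda>p. phi M v (fst p) (snd p)"
  have g0: "?P ({}, \<lambda>_. {})" unfolding good_def by simp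
  have bnd: "\<forall>p. ?P p \<longrightarrow> ?f p < Suc (n * Suc (card (Pow M)))"
    using phi_bound[OF assms(1)] by (simp add: le_imp_less_Suc)
  obtain p where p: "?P p" and pmax: "\<forall>q. ?P q \<longrightarrow> ?f q \<le> ?f p"
    using ex_has_greatest_nat[of ?P _ ?f, OF g0 bnd] by blast
  define S where "S = fst p"
  define X where "X = snd p"
  have G: "good M n v t S X" using p unfolding S_def X_def by simp
  have Sall: "S = {1..n}"
  proof (rule ccontr)
    assume "S \<noteq> {1..n}"
    then obtain S' X' where "good M n v t S' X'" "phi M v S X < phi M v S' X'"
      using step[OF assms(1,3) rm G] by blast
    moreover have "?f (S', X') \<le> ?f p" using pmax \<open>good M n v t S' X'\<close> by simp
    ultimately show False unfolding S_def X_def by simp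
  qed
  note G2 = goodD(2)[OF G] and G3 = goodD(3)[OF G] and G4 = goodD(4)[OF G] and G5 = goodD(5)[OF G]
  define A where "A = X(0 := M - \<Union>(X ` {1..n}))"
  have "partial_allocation M n A"
    unfolding partial_allocation_def is_partition_def
  proof
    show "\<forall>i\<in>{0..n}. \<forall>j\<in>{0..n}. i \<noteq> j \<longrightarrow> A i \<inter> A j = {}"
    proof (intro ballI impI)
      fix i j assume ij: "i \<in> {0..n}" "j \<in> {0..n}" "i \<noteq> j"
      show "A i \<inter> A j = {}"
      proof (cases "i = 0")
        case True
        then have "j \<in> {1..n}" using ij by auto
        then show ?thesis unfolding A_def using True ij by auto
      next
        case False
        show ?thesis
        proof (cases "j = 0")
          case True
          then have "i \<in> {1..n}" using ij False by auto
          then show ?thesis unfolding A_def using True ij by auto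
        next
          case jF: False
          then have "i \<in> S" "j \<in> S" using ij False Sall by auto
          then show ?thesis unfolding A_def using G3 ij False jF by auto
        qed
      qed
    qed
    have e: "{0..n} = insert 0 {1..n}" by auto
    have "(\<Union>i\<in>{1..n}. A i) = \<Union>(X ` {1..n})" unfolding A_def by auto
    moreover have "\<Union>(X ` {1..n}) \<subseteq> M" using G2 Sall by auto
    ultimately show "(\<Union>i\<in>{0..n}. A i) = M" unfolding e A_def by auto
  qed
  moreover have "\<forall>i\<in>{1..n}. RMMS M (v i) n \<le> v i (A i)"
    using G4 Sall unfolding A_def t_def by auto
  moreover have "EFX n v A"
    unfolding EFX_def
  proof (intro ballI impI)
    fix i j e assume ij: "i \<in> {1..n}" "j \<in> {1..n}" "i \<noteq> j" and e: "e \<in> A j"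
    have "A i = X i" "A j = X j" using ij unfolding A_def by auto
    then show "v i (A j - {e}) \<le> v i (A i)" using G5 ij e Sall by auto
  qed
  ultimately show ?thesis by blast
qed

end
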